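(* Let $\mu_m$ be the distribution on $\{0,1\}^m\times\{0,1\}^m$ under which each of the $2m$ bits is independently equal to 1 with probability $\sqrt{1/2}$ and to 0 with probability $1-\sqrt{1/2}$. Then $disc_{\mu_m}(IP_m)\le O(2^{-m/4})$.
   Context: $IP_m(x,y)=\bigoplus_{i=1}^m(x_i\wedge y_i)$. For a distribution $\mu$ on $\{0,1\}^m\times\{0,1\}^m$ and $f$ with range $\{0,1\}$, $disc_\mu(f)=\max_R|\mu(R\cap f^{-1}(0))-\mu(R\cap f^{-1}(1))|$, where $R$ ranges over rectangles $A\times B$ with $A,B\subseteq\{0,1\}^m$. *)

theory Defs
  imports Complex_Main
begin

text \<open>The Boolean cube {0,1}^m, bits represented as booleans (True = 1).\<close>
definition cube :: "nat \<Rightarrow> bool list set" where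
  "cube m = {xs. length xs = m}"

definition IP :: "nat \<Rightarrow> bool list \<Rightarrow> bool list \<Rightarrow> nat" where
  "IP m x y = (\<Sum>i<m. if x ! i \<and> y ! i then 1 else 0) mod 2"

definition bitp :: "bool \<Rightarrow> real" where
  "bitp b = (if b then sqrt (1/2) else 1 - sqrt (1/2))"

definition mu :: "nat \<Rightarrow> bool list \<times> bool list \<Rightarrow> real" where
  "mu m p = (\<Prod>i<m. bitp (fst p ! i) * bitp (snd p ! i))"

definition mu_set :: "nat \<Rightarrow> (bool list \<times> bool list) set \<Rightarrow> real" where
  "mu_set m S = (\<Sum>p \<in> S \<inter> (cube m \<times> cube m). mu m p)"

definition disc :: "nat \<Rightarrow> (bool list \<Rightarrow> bool list \<Rightarrow> nat) \<Rightarrow> real" where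
  "disc m f = Max {\<bar>mu_set m ((A \<times> B) \<inter> {p. f (fst p) (snd p) = 0})
                   - mu_set m ((A \<times> B) \<inter> {p. f (fst p) (snd p) = 1})\<bar>
                  | A B. A \<subseteq> cube m \<and> B \<subseteq> cube m}"

end

theory Submission
  imports Defs "HOL-Analysis.Analysis"
begin

lemma cube_Suc: "cube (Suc m) = (\<lambda>(a,x). a#x) ` (UNIV \<times> cube m)"
  by (auto simp: cube_def length_Suc_conv)

lemma finite_cube: "finite (cube m)"
proof -
  have "cube m = {xs. set xs \<subseteq> (UNIV::bool set) \<and> length xs = m}" by (auto simp: cube_def)
  then show ?thesis using finite_lists_length_eq[of "UNIV::bool set" m] by simp
qed

lemma sum_cube_prod:
  "(\<Sum>x\<in>cube m. \<Prod>i<m. g i (x!i)) = (\<Prod>i<m. (g i True + g i False :: real))"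
proof (induction m arbitrary: g)
  case 0
  then show ?case by (simp add: cube_def)
next
  case (Suc m)
  have inj: "inj_on (\<lambda>(a,x). a#x) (UNIV \<times> cube m)" by (auto simp: inj_on_def)
  have "(\<Sum>x\<in>cube (Suc m). \<Prod>i<Suc m. g i (x!i))
      = (\<Sum>(a,x)\<in>UNIV \<times> cube m. \<Prod>i<Suc m. g i ((a#x)!i))"
    unfolding cube_Suc by (subst sum.reindex[OF inj]) (simp add: case_prod_unfold)
  also have "\<dots> = (\<Sum>a\<in>UNIV. \<Sum>x\<in>cube m. g 0 a * (\<Prod>i<m. g (Suc i) (x!i)))"
    by (subst sum.cartesian_product[symmetric]) (simp del: prod.lessThan_Suc add: prod.lessThan_Suc_shift)
  also have "\<dots> = (\<Sum>a\<in>UNIV. g 0 a * (\<Prod>i<m. (g (Suc i) True + g (Suc i) False)))"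
    by (simp add: sum_distrib_left[symmetric] Suc.IH[of "\<lambda>i. g (Suc i)"])
  also have "\<dots> = (\<Prod>i<Suc m. (g i True + g i False))"
    by (simp del: prod.lessThan_Suc add: prod.lessThan_Suc_shift UNIV_bool distrib_right)
  finally show ?case .
qed

definition W :: "nat \<Rightarrow> bool list \<Rightarrow> real" where
  "W m x = (\<Prod>i<m. bitp (x!i))"

definition sg :: "nat \<Rightarrow> bool list \<Rightarrow> bool list \<Rightarrow> real" where
  "sg m x y = (-1) ^ IP m x y"

lemma sg_prod: "sg m x y = (\<Prod>i<m. if x!i \<and> y!i then -1 else 1)"
proof -
  have "sg m x y = (-1) ^ (\<Sum>i<m. if x ! i \<and> y ! i then 1 else 0::nat)"
    unfolding sg_def IP_def by (simp add: minus_one_power_iff)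
  also have "\<dots> = (\<Prod>i<m. if x!i \<and> y!i then -1 else 1)"
    by (subst power_sum) (rule prod.cong; simp)
  finally show ?thesis .
qed

lemma orth:
  assumes "y \<in> cube m" "z \<in> cube m"
  shows "(\<Sum>x\<in>cube m. sg m x y * sg m x z) = (if y = z then 2^m else 0)"
proof -
  have "(\<Sum>x\<in>cube m. sg m x y * sg m x z)
     = (\<Sum>x\<in>cube m. \<Prod>i<m. (\<lambda>i a. (if a \<and> y!i then -1 else 1) * (if a \<and> z!i then -1 else (1::real))) i (x!i))"
    by (simp add: sg_prod prod.distrib)
  also have "\<dots> = (\<Prod>i<m. (if y!i = z!i then 2 else 0))"
    by (subst sum_cube_prod) (rule prod.cong; auto)
  also have "\<dots> = (if y = z then 2^m else 0)"
  proof (cases "y = z")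
    case True then show ?thesis by simp
  next
    case False
    have "\<exists>i<m. y!i \<noteq> z!i"
    proof (rule ccontr)
      assume "\<not> (\<exists>i<m. y!i \<noteq> z!i)"
      then have "y = z" using assms by (intro nth_equalityI) (auto simp: cube_def)
      then show False using False by simp
    qed
    then obtain i where "i < m" "y!i \<noteq> z!i" by blast
    then show ?thesis using False by (auto intro!: prod_zero)
  qed
  finally show ?thesis .
qed

lemma sumW2: "(\<Sum>x\<in>cube m. (W m x)^2) = (2 - 2 * sqrt (1/2))^m"
proof -
  have "(\<Sum>x\<in>cube m. (W m x)^2) = (\<Sum>x\<in>cube m. \<Prod>i<m. (\<lambda>i a. (bitp a)^2) i (x!i))"
    by (simp add: W_def prod_power_distrib)
  also have "\<dots> = (\<Prod>i<m. (bitp True)^2 + (bitp False)^2)"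
    by (subst sum_cube_prod) simp
  also have "(bitp True)^2 + (bitp False)^2 = 2 - 2 * sqrt (1/2)"
    by (simp add: bitp_def power2_diff)
  finally show ?thesis by simp
qed

lemma W_nonneg: "W m x \<ge> 0"
proof -
  have "sqrt (1/2::real) \<le> 1" by simp
  then show ?thesis unfolding W_def bitp_def by (intro prod_nonneg) auto
qed

lemma rect_eq:
  assumes "A \<subseteq> cube m" "B \<subseteq> cube m"
  shows "mu_set m ((A \<times> B) \<inter> {p. IP m (fst p) (snd p) = 0})
                   - mu_set m ((A \<times> B) \<inter> {p. IP m (fst p) (snd p) = 1})
        = (\<Sum>x\<in>A. W m x * (\<Sum>y\<in>B. W m y * sg m x y))"
proof -
  have fA: "finite A" "finite B" using assms finite_cube finite_subset by blast+
  have e: "(A \<times> B) \<inter> {p. IP m (fst p) (snd p) = k} \<inter> (cube m \<times> cube m)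
        = {p \<in> A \<times> B. IP m (fst p) (snd p) = k}" for k using assms by auto
  have "mu_set m ((A \<times> B) \<inter> {p. IP m (fst p) (snd p) = 0})
                   - mu_set m ((A \<times> B) \<inter> {p. IP m (fst p) (snd p) = 1})
     = (\<Sum>p\<in>A \<times> B. (if IP m (fst p) (snd p) = 0 then mu m p else 0) - (if IP m (fst p) (snd p) = 1 then mu m p else 0))"
    unfolding mu_set_def e using fA by (simp add: sum.inter_filter sum_subtractf)
  also have "\<dots> = (\<Sum>p\<in>A \<times> B. W m (fst p) * W m (snd p) * sg m (fst p) (snd p))"
  proof (rule sum.cong[OF refl])
    fix p assume "p \<in> A \<times> B"
    have "IP m (fst p) (snd p) < 2" unfolding IP_def by simp
    then have "IP m (fst p) (snd p) = 0 \<or> IP m (fst p) (snd p) = 1" by linarith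
    moreover have "mu m p = W m (fst p) * W m (snd p)" unfolding mu_def W_def by (simp add: prod.distrib)
    ultimately show "(if IP m (fst p) (snd p) = 0 then mu m p else 0) - (if IP m (fst p) (snd p) = 1 then mu m p else 0)
       = W m (fst p) * W m (snd p) * sg m (fst p) (snd p)" unfolding sg_def by auto
  qed
  also have "\<dots> = (\<Sum>x\<in>A. \<Sum>y\<in>B. W m x * W m y * sg m x y)"
    by (subst sum.cartesian_product) (simp add: case_prod_unfold)
  also have "\<dots> = (\<Sum>x\<in>A. W m x * (\<Sum>y\<in>B. W m y * sg m x y))"
    by (simp add: sum_distrib_left mult.assoc)
  finally show ?thesis .
qed

lemma rect_bound:
  assumes "A \<subseteq> cube m" "B \<subseteq> cube m"
  shows "(\<Sum>x\<in>A. W m x * (\<Sum>y\<in>B. W m y * sg m x y))^2 \<le> 2^m * ((2 - 2 * sqrt (1/2))^m)^2"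
proof -
  define f where "f x = (\<Sum>y\<in>B. W m y * sg m x y)" for x
  have fA: "finite A" "finite B" using assms finite_cube finite_subset by blast+
  have "(\<Sum>x\<in>A. W m x * f x)^2 \<le> (\<Sum>x\<in>A. (W m x)^2) * (\<Sum>x\<in>A. (f x)^2)"
    by (rule Cauchy_Schwarz_ineq_sum)
  also have "\<dots> \<le> (\<Sum>x\<in>cube m. (W m x)^2) * (\<Sum>x\<in>cube m. (f x)^2)"
    by (intro mult_mono sum_mono2 finite_cube assms sum_nonneg) auto
  also have "(\<Sum>x\<in>cube m. (f x)^2) = (\<Sum>y\<in>B. \<Sum>z\<in>B. W m y * W m z * (\<Sum>x\<in>cube m. sg m x y * sg m x z))"
  proof -
    have "(\<Sum>x\<in>cube m. (f x)^2) = (\<Sum>x\<in>cube m. \<Sum>y\<in>B. \<Sum>z\<in>B. W m y * W m z * (sg m x y * sg m x z))"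
      unfolding f_def power2_eq_square sum_product by (simp add: mult_ac)
    also have "\<dots> = (\<Sum>y\<in>B. \<Sum>x\<in>cube m. \<Sum>z\<in>B. W m y * W m z * (sg m x y * sg m x z))"
      by (rule sum.swap)
    also have "\<dots> = (\<Sum>y\<in>B. \<Sum>z\<in>B. \<Sum>x\<in>cube m. W m y * W m z * (sg m x y * sg m x z))"
      by (rule sum.cong[OF refl], rule sum.swap)
    also have "\<dots> = (\<Sum>y\<in>B. \<Sum>z\<in>B. W m y * W m z * (\<Sum>x\<in>cube m. sg m x y * sg m x z))"
      by (simp only: sum_distrib_left)
    finally show ?thesis .
  qed
  also have "\<dots> = (\<Sum>y\<in>B. \<Sum>z\<in>B. W m y * W m z * (if y = z then 2^m else 0))"
  proof (intro sum.cong refl)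
    fix y z assume "y \<in> B" "z \<in> B"
    then show "W m y * W m z * (\<Sum>x\<in>cube m. sg m x y * sg m x z) = W m y * W m z * (if y = z then 2^m else 0)"
    proof -
      have "y \<in> cube m" "z \<in> cube m" using assms \<open>y \<in> B\<close> \<open>z \<in> B\<close> by auto
      then show ?thesis by (simp add: orth)
    qed
  qed
  also have "\<dots> = 2^m * (\<Sum>y\<in>B. (W m y)^2)"
    using fA by (simp add: sum_distrib_left power2_eq_square mult_ac if_distrib sum.delta cong: if_cong)
  also have "\<dots> \<le> 2^m * (\<Sum>x\<in>cube m. (W m x)^2)"
    by (intro mult_left_mono sum_mono2 finite_cube assms) auto
  finally have "(\<Sum>x\<in>A. W m x * f x)^2 \<le> (\<Sum>x\<in>cube m. (W m x)^2) * (2^m * (\<Sum>x\<in>cube m. (W m x)^2))"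
    by (simp add: mult_left_mono sum_nonneg)
  then show ?thesis unfolding f_def sumW2 by (simp add: power2_eq_square mult_ac)
qed

lemma numeric: "2 * (2 - 2 * sqrt (1/2::real))^2 \<le> sqrt (1/2)"
proof -
  define s where "s = sqrt (1/2::real)"
  have s2: "s^2 = 1/2" unfolding s_def by simp
  have "s \<ge> 0" unfolding s_def by simp
  have "(12/17::real)^2 \<le> 1/2" by (simp add: power2_eq_square)
  then have "(12/17)^2 \<le> s^2" using s2 by simp
  then have "12/17 \<le> s" using \<open>s \<ge> 0\<close> by (rule power2_le_imp_le)
  moreover have "2 * (2 - 2 * s)^2 = 12 - 16 * s" using s2 by (simp add: power2_eq_square algebra_simps)
  ultimately show ?thesis unfolding s_def[symmetric] by linarith
qed

theorem lemma6p2: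
  shows "\<exists>C::real. \<forall>m::nat. disc m (IP m) \<le> C * 2 powr (- real m / 4)"
proof (intro exI allI)
  fix m :: nat
  let ?S = "{\<bar>mu_set m ((A \<times> B) \<inter> {p. IP m (fst p) (snd p) = 0})
                   - mu_set m ((A \<times> B) \<inter> {p. IP m (fst p) (snd p) = 1})\<bar>
                  | A B. A \<subseteq> cube m \<and> B \<subseteq> cube m}"
  have fin: "finite ?S"
  proof -
    have "?S = (\<lambda>(A,B). \<bar>mu_set m ((A \<times> B) \<inter> {p. IP m (fst p) (snd p) = 0})
                   - mu_set m ((A \<times> B) \<inter> {p. IP m (fst p) (snd p) = 1})\<bar>) ` (Pow (cube m) \<times> Pow (cube m))"
      by auto
    then show ?thesis using finite_cube by simp
  qed
  have ne: "?S \<noteq> {}" by blast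
  have sq: "(1 * 2 powr (- real m / 4))^2 = sqrt (1/2) ^ m"
  proof -
  have "(2 powr (- real m / 4))^2 = 2 powr (- real m / 4 + - real m / 4)"
    unfolding power2_eq_square by (rule powr_add[symmetric])
  also have "\<dots> = 2 powr (- (real m / 2))"
    by (rule arg_cong[where f="\<lambda>t. (2::real) powr t"]) linarith
  also have "\<dots> = 1 / 2 powr (real m / 2)" by (simp only: powr_minus divide_inverse mult_1)
  also have "\<dots> = (1/2) powr (real m / 2)" by (simp only: powr_divide powr_one_eq_one)
  also have "\<dots> = ((1/2) powr (1/2)) powr real m" by (simp only: powr_powr) simp
  also have "\<dots> = sqrt (1/2) ^ m" by (simp add: powr_half_sqrt powr_realpow)
  finally show ?thesis by simp
qed
  have "Max ?S \<le> 1 * 2 powr (- real m / 4)"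
  proof (rule Max.boundedI[OF fin ne])
    fix a assume "a \<in> ?S"
    then obtain A B where AB: "A \<subseteq> cube m" "B \<subseteq> cube m"
      and a: "a = \<bar>mu_set m ((A \<times> B) \<inter> {p. IP m (fst p) (snd p) = 0})
                   - mu_set m ((A \<times> B) \<inter> {p. IP m (fst p) (snd p) = 1})\<bar>" by blast
    have "a^2 \<le> 2^m * ((2 - 2 * sqrt (1/2))^m)^2"
      unfolding a rect_eq[OF AB] power2_abs by (rule rect_bound[OF AB])
    also have "\<dots> = (2 * (2 - 2 * sqrt (1/2))^2)^m" by (simp add: power_mult_distrib power_mult[symmetric] mult.commute)
    also have "\<dots> \<le> sqrt (1/2) ^ m"
      by (rule power_mono[OF numeric]) simp
    also have "\<dots> = (1 * 2 powr (- real m / 4))^2" using sq by simp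
    finally show "a \<le> 1 * 2 powr (- real m / 4)"
      by (rule power2_le_imp_le) simp
  qed
  then show "disc m (IP m) \<le> 1 * 2 powr (- real m / 4)" unfolding disc_def .
qed

end
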